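(* Let $G=(V,E)$ be a finite connected simple graph on $N\ge2$ vertices with adjacency matrix $A$, whose largest eigenvalue is $\phi_0$; let $W\subseteq V$ be a nonempty set of marked vertices, and for $\gamma>0$ let $H(\gamma)=-\gamma A-\sum_{w\in W}|w\rangle\langle w|$ on $\mathbb{C}^V$. Fix an index $j\in\{2,\dots,N\}$, and for $\gamma>0$ let $\lambda^-(\gamma)$ be the smallest eigenvalue of $H(\gamma)$ and $\lambda^+(\gamma)$ its $j$-th smallest eigenvalue counted with multiplicity (so $\lambda^+(\gamma)>\lambda^-(\gamma)$). Then there exists $\gamma>0$ such that $$-\gamma\phi_0=\frac{\lambda^-(\gamma)+\lambda^+(\gamma)}{2}.$$
   Context: $\{|v\rangle: v\in V\}$ is the computational basis of $\mathbb{C}^V$. *)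

theory Defs
  imports "Jordan_Normal_Form.Char_Poly" "HOL-Computational_Algebra.Fundamental_Theorem_Algebra"
    "HOL-Library.Multiset"
begin

definition simple_graph :: "nat \<Rightarrow> (nat \<Rightarrow> nat \<Rightarrow> bool) \<Rightarrow> bool" where
  "simple_graph N E \<longleftrightarrow>
     (\<forall>u v. E u v \<longrightarrow> u < N \<and> v < N) \<and>
     (\<forall>u v. E u v \<longrightarrow> E v u) \<and> (\<forall>v. \<not> E v v)"

definition connected_graph :: "nat \<Rightarrow> (nat \<Rightarrow> nat \<Rightarrow> bool) \<Rightarrow> bool" where
  "connected_graph N E \<longleftrightarrow> (\<forall>u<N. \<forall>v<N. E\<^sup>*\<^sup>* u v)"

definition adjacency_matrix :: "nat \<Rightarrow> (nat \<Rightarrow> nat \<Rightarrow> bool) \<Rightarrow> complex mat" where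
  "adjacency_matrix N E = mat N N (\<lambda>(u, v). if E u v then 1 else 0)"

definition marked_projector :: "nat \<Rightarrow> nat set \<Rightarrow> complex mat" where
  "marked_projector N W = mat N N (\<lambda>(u, v). if u = v \<and> u \<in> W then 1 else 0)"

definition search_hamiltonian :: "nat \<Rightarrow> (nat \<Rightarrow> nat \<Rightarrow> bool) \<Rightarrow> nat set \<Rightarrow> real \<Rightarrow> complex mat" where
  "search_hamiltonian N E W \<gamma> =
     (- (complex_of_real \<gamma> \<cdot>\<^sub>m adjacency_matrix N E)) - marked_projector N W"

text \<open>Eigenvalues counted with multiplicity (roots of the characteristic polynomial),
  listed in increasing order of real part (they are real for Hermitian matrices).\<close>
definition eigenvalues_sorted :: "complex mat \<Rightarrow> real list" where
  "eigenvalues_sorted M = sorted_list_of_multiset (image_mset Re (proots (char_poly M)))"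

text \<open>k-th smallest eigenvalue, 1-indexed.\<close>
definition kth_eigenvalue :: "complex mat \<Rightarrow> nat \<Rightarrow> real" where
  "kth_eigenvalue M k = eigenvalues_sorted M ! (k - 1)"

definition largest_eigenvalue :: "complex mat \<Rightarrow> real" where
  "largest_eigenvalue M = last (eigenvalues_sorted M)"

end

theory Submission
  imports Defs "Jordan_Normal_Form.Schur_Decomposition"
begin

definition ip :: "complex vec \<Rightarrow> complex vec \<Rightarrow> complex" where
  "ip x y = (\<Sum>i<dim_vec x. cnj (x$i) * y$i)"

definition nrm2 :: "complex vec \<Rightarrow> real" where
  "nrm2 x = (\<Sum>i<dim_vec x. (cmod (x$i))^2)"

definition herm :: "nat \<Rightarrow> complex mat \<Rightarrow> bool" where
  "herm n M \<longleftrightarrow> M \<in> carrier_mat n n \<and> (\<forall>i<n. \<forall>j<n. M$$(j,i) = cnj (M$$(i,j)))"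

lemma mv_idx: "M \<in> carrier_mat n n \<Longrightarrow> x \<in> carrier_vec n \<Longrightarrow> i < n \<Longrightarrow>
  (M *\<^sub>v x) $ i = (\<Sum>j<n. M $$ (i,j) * x $ j)"
  by (auto simp: mult_mat_vec_def scalar_prod_def lessThan_atLeast0 row_def)

lemma ip_cnj: "dim_vec y = dim_vec x \<Longrightarrow> cnj (ip x y) = ip y x"
  by (simp add: ip_def mult.commute)

lemma ip_self: "ip x x = of_real (nrm2 x)"
  unfolding ip_def nrm2_def of_real_sum
proof (intro sum.cong refl)
  fix i show "cnj (x$i) * x$i = complex_of_real ((cmod (x$i))^2)"
    using complex_norm_square[of "x$i"] by (simp add: mult.commute)
qed

lemma nrm2_ge0: "nrm2 x \<ge> 0"
  unfolding nrm2_def by (intro sum_nonneg) auto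

lemma nrm2_eq0: assumes "x \<in> carrier_vec n" shows "nrm2 x = 0 \<longleftrightarrow> x = 0\<^sub>v n"
proof
  assume "nrm2 x = 0"
  hence "\<forall>i\<in>{..<dim_vec x}. (cmod (x$i))^2 = 0"
    unfolding nrm2_def by (subst sum_nonneg_eq_0_iff[symmetric]) auto
  thus "x = 0\<^sub>v n" using assms by (intro eq_vecI) auto
next
  assume "x = 0\<^sub>v n"
  thus "nrm2 x = 0" unfolding nrm2_def by (intro sum.neutral) auto
qed

lemma herm_ip: assumes h: "herm n M" and x: "x \<in> carrier_vec n" and y: "y \<in> carrier_vec n"
  shows "ip x (M *\<^sub>v y) = ip (M *\<^sub>v x) y"
proof -
  have M: "M \<in> carrier_mat n n" using h unfolding herm_def by blast
  have s: "\<And>i j. i<n \<Longrightarrow> j<n \<Longrightarrow> M$$(j,i) = cnj (M$$(i,j))"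
    using h unfolding herm_def by blast
  have s2: "\<And>i j. i<n \<Longrightarrow> j<n \<Longrightarrow> cnj (M$$(j,i)) = M$$(i,j)"
    using s by (metis complex_cnj_cnj)
  have "ip x (M *\<^sub>v y) = (\<Sum>i<n. \<Sum>j<n. cnj (x$i) * M$$(i,j) * y$j)"
    unfolding ip_def using x y M by (simp add: mv_idx sum_distrib_left mult.assoc del: index_mult_mat_vec)
  also have "\<dots> = (\<Sum>j<n. \<Sum>i<n. cnj (x$i) * M$$(i,j) * y$j)" by (rule sum.swap)
  also have "\<dots> = ip (M *\<^sub>v x) y"
    unfolding ip_def using x y M
    by (auto simp: mv_idx sum_distrib_right s2 simp del: index_mult_mat_vec intro!: sum.cong)
  finally show ?thesis .
qed

lemma herm_qf_real: assumes h: "herm n M" and x: "x \<in> carrier_vec n"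
  shows "ip x (M *\<^sub>v x) = of_real (Re (ip x (M *\<^sub>v x)))"
proof -
  have M: "M \<in> carrier_mat n n" using h unfolding herm_def by blast
  have "cnj (ip x (M *\<^sub>v x)) = ip (M *\<^sub>v x) x" using M x by (intro ip_cnj) auto
  also have "\<dots> = ip x (M *\<^sub>v x)" using herm_ip[OF h x x] by simp
  finally show ?thesis by (auto simp: complex_eq_iff)
qed

lemma mm_idx: "A \<in> carrier_mat n n \<Longrightarrow> B \<in> carrier_mat n n \<Longrightarrow> i < n \<Longrightarrow> j < n \<Longrightarrow>
  (A * B) $$ (i,j) = (\<Sum>l<n. A $$ (i,l) * B $$ (l,j))"
  by (auto simp: scalar_prod_def lessThan_atLeast0)

lemma kernel_exists:
  assumes fs: "set fs \<subseteq> carrier_vec n" and len: "length fs < n"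
  shows "\<exists>x\<in>carrier_vec n. x \<noteq> 0\<^sub>v n \<and> (\<forall>f\<in>set fs. ip f x = 0)"
proof -
  define c where "c = (\<lambda>i. if i < length fs then vec n (\<lambda>j. cnj ((fs!i)$j)) else 0\<^sub>v n)"
  define F where "F = mat\<^sub>r n n (\<lambda>i. if i = n - 1 then 0\<^sub>v n else c i)"
  have "det F = 0" unfolding F_def
    by (rule det_row_0) (use len in \<open>auto simp: c_def\<close>)
  moreover have F: "F \<in> carrier_mat n n" unfolding F_def by auto
  ultimately obtain v where v: "v \<in> carrier_vec n" "v \<noteq> 0\<^sub>v n" "F *\<^sub>v v = 0\<^sub>v n"
    using det_0_iff_vec_prod_zero_field[OF F] by auto
  have "ip f v = 0" if "f \<in> set fs" for f
  proof -
    obtain i where i: "i < length fs" "f = fs ! i" using \<open>f \<in> set fs\<close> by (auto simp: in_set_conv_nth)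
    have fi: "f \<in> carrier_vec n" using fs i by (auto)
    have "(F *\<^sub>v v) $ i = 0" using v i len by simp
    moreover have "(F *\<^sub>v v) $ i = (\<Sum>j<n. F $$ (i,j) * v $ j)" using mv_idx[OF F v(1)] i len by simp
    moreover have "\<And>j. j < n \<Longrightarrow> F $$ (i,j) = cnj (f $ j)"
      using i len unfolding F_def c_def by (auto simp: mat_of_rows_def)
    ultimately show ?thesis using fi unfolding ip_def by simp
  qed
  thus ?thesis using v by blast
qed

lemma herm_nil:
  assumes h: "herm n M" and sim: "similar_mat_wit M B P Q" and ut: "upper_triangular B"
    and d0: "\<And>i. i<n \<Longrightarrow> B$$(i,i) = 0"
  shows "M = 0\<^sub>m n n"
proof -
  have M: "M \<in> carrier_mat n n" using h unfolding herm_def by blast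
  note sd = similar_mat_witD2[OF M sim]
  have B: "B \<in> carrier_mat n n" and P: "P \<in> carrier_mat n n" and Q: "Q \<in> carrier_mat n n"
    using sd by auto
  have MP: "M * P = P * B"
  proof -
    have "M * P = P * B * Q * P" using sd by simp
    also have "\<dots> = P * B * (Q * P)" using B P Q by (simp add: assoc_mult_mat[of _ n n _ n _ n])
    also have "\<dots> = P * B" using sd B P by simp
    finally show ?thesis .
  qed
  define C where "C = M * P"
  have C: "C \<in> carrier_mat n n" using M P C_def by auto
  have Cidx: "C $$ (r,i) = (\<Sum>l<n. P $$ (r,l) * B $$ (l,i))" if "r<n" "i<n" for r i
    unfolding C_def MP using mm_idx[OF P B that] .
  have Cidx2: "C $$ (r,i) = (\<Sum>s<n. M $$ (r,s) * P $$ (s,i))" if "r<n" "i<n" for r i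
    unfolding C_def using mm_idx[OF M P that] .
  have Bz: "B $$ (l,i) = 0" if "i \<le> l" "l < n" "i < n" for l i
  proof (cases "l = i")
    case True thus ?thesis using d0 that by simp
  next
    case False thus ?thesis using ut B that unfolding upper_triangular_def by auto
  qed
  have main: "\<forall>r<n. C $$ (r,i) = 0" if "i < n" for i
    using that
  proof (induction i rule: less_induct)
    case (less i)
    define y where "y = col P i"
    define z where "z = col C i"
    have y: "y \<in> carrier_vec n" and z: "z \<in> carrier_vec n" using P C y_def z_def by auto
    have zy: "z = M *\<^sub>v y" unfolding z_def y_def C_def by (rule col_mult2[OF M P less.prems])
    have Mz: "M *\<^sub>v z = 0\<^sub>v n"
    proof (rule eq_vecI)
      fix r assume r: "r < dim_vec (0\<^sub>v n :: complex vec)"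
      hence r: "r < n" by simp
      have "(M *\<^sub>v z) $ r = (\<Sum>s<n. M $$ (r,s) * (\<Sum>l<n. P $$ (s,l) * B $$ (l,i)))"
        using mv_idx[OF M z r] Cidx less.prems C unfolding z_def by (auto intro!: sum.cong)
      also have "\<dots> = (\<Sum>s<n. \<Sum>l<n. M $$ (r,s) * P $$ (s,l) * B $$ (l,i))"
        by (simp add: sum_distrib_left mult.assoc)
      also have "\<dots> = (\<Sum>l<n. \<Sum>s<n. M $$ (r,s) * P $$ (s,l) * B $$ (l,i))"
        by (rule sum.swap)
      also have "\<dots> = (\<Sum>l<n. (\<Sum>s<n. M $$ (r,s) * P $$ (s,l)) * B $$ (l,i))"
        by (simp add: sum_distrib_right)
      also have "\<dots> = (\<Sum>l<n. C $$ (r,l) * B $$ (l,i))" using Cidx2 r by simp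
      also have "\<dots> = 0"
      proof (intro sum.neutral ballI)
        fix l assume l: "l \<in> {..<n}"
        show "C $$ (r,l) * B $$ (l,i) = 0"
        proof (cases "l < i")
          case True thus ?thesis using less.IH[of l] less.prems r by auto
        next
          case False thus ?thesis using Bz[of i l] l less.prems by auto
        qed
      qed
      finally show "(M *\<^sub>v z) $ r = (0\<^sub>v n) $ r" using r by simp
    qed (use M in auto)
    have "ip z z = ip (M *\<^sub>v y) z" using zy by simp
    also have "\<dots> = ip y (M *\<^sub>v z)" using herm_ip[OF h y z] by simp
    also have "\<dots> = 0" unfolding Mz ip_def using y by simp
    finally have "nrm2 z = 0" unfolding ip_self by simp
    hence "z = 0\<^sub>v n" using nrm2_eq0[OF z] by simp
    thus ?case unfolding z_def using C less.prems
      by (metis carrier_matD(1) index_col index_zero_vec(1) carrier_matD(2))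
  qed
  have C0: "C = 0\<^sub>m n n" using main C by (intro eq_matI) auto
  have "M = M * (P * Q)" using sd M by simp
  also have "\<dots> = C * Q" unfolding C_def using M P Q by (simp add: assoc_mult_mat[of _ n n _ n _ n])
  also have "\<dots> = 0\<^sub>m n n" unfolding C0 using Q by simp
  finally show ?thesis .
qed

lemma herm_nil2:
  assumes h: "herm n M" and ev: "\<And>e. eigenvalue M e \<Longrightarrow> e = 0"
  shows "M = 0\<^sub>m n n"
proof -
  have M: "M \<in> carrier_mat n n" using h unfolding herm_def by blast
  obtain as where cp: "char_poly M = (\<Prod>a\<leftarrow>as. [:- a, 1:])" and len: "length as = n"
    using char_poly_factorized[OF M] by blast
  have as0: "a = 0" if "a \<in> set as" for a
  proof -
    have "poly [:- a, 1:] a = 0" by simp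
    hence "poly (char_poly M) a = 0" unfolding cp poly_prod_list_zero_iff using that
      by auto
    hence "eigenvalue M a" using eigenvalue_root_char_poly[OF M] by simp
    thus ?thesis by (rule ev)
  qed
  obtain B P Q where bpq: "schur_decomposition M as = (B,P,Q)" by (metis prod_cases3)
  from schur_decomposition[OF M cp bpq]
  have sim: "similar_mat_wit M B P Q" and ut: "upper_triangular B" and dg: "diag_mat B = as" by auto
  have B: "B \<in> carrier_mat n n" using similar_mat_witD2[OF M sim] by auto
  have "B $$ (i,i) = 0" if "i < n" for i
  proof -
    have "B $$ (i,i) = diag_mat B ! i" using B that by (simp add: diag_mat_def)
    moreover have "as ! i \<in> set as" using len that by simp
    ultimately show ?thesis using dg as0[of "as ! i"] by simp
  qed
  thus ?thesis by (rule herm_nil[OF h sim ut])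
qed

lemma ip_smult_right: "dim_vec y = dim_vec x \<Longrightarrow> ip x (c \<cdot>\<^sub>v y) = c * ip x y"
  unfolding ip_def by (simp add: sum_distrib_left mult.left_commute)

lemma ip_smult_left: "ip (c \<cdot>\<^sub>v x) y = cnj c * ip x y"
  unfolding ip_def by (simp add: sum_distrib_left mult.assoc)

lemma ip_unit_left: "i < n \<Longrightarrow> v \<in> carrier_vec n \<Longrightarrow> ip (unit_vec n i) v = v $ i"
proof -
  assume i: "i < n" and v: "v \<in> carrier_vec n"
  have "ip (unit_vec n i) v = (\<Sum>l<n. if l = i then v $ i else 0)"
    unfolding ip_def using i by (intro sum.cong) auto
  thus ?thesis using i by simp
qed

lemma mv_unit: "(M :: complex mat) \<in> carrier_mat n n \<Longrightarrow> i < n \<Longrightarrow> j < n \<Longrightarrow> (M *\<^sub>v unit_vec n j) $ i = M $$ (i,j)"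
proof -
  assume M: "M \<in> carrier_mat n n" and i: "i < n" and j: "j < n"
  have "(M *\<^sub>v unit_vec n j) $ i = (\<Sum>l<n. M $$ (i,l) * unit_vec n j $ l)"
    using mv_idx[OF M _ i, of "unit_vec n j"] by simp
  also have "\<dots> = (\<Sum>l<n. if l = j then M $$ (i,j) else 0)"
    using j by (intro sum.cong) auto
  finally show ?thesis using j by simp
qed

lemma ip_unit_right: "j < n \<Longrightarrow> v \<in> carrier_vec n \<Longrightarrow> ip v (unit_vec n j) = cnj (v $ j)"
proof -
  assume j: "j < n" and v: "v \<in> carrier_vec n"
  have "ip v (unit_vec n j) = (\<Sum>l<n. if l = j then cnj (v $ j) else 0)"
    unfolding ip_def using v j by (intro sum.cong) auto
  thus ?thesis using j by simp
qed

lemma herm_of_ip: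
  assumes M: "M \<in> carrier_mat n n"
    and h: "\<And>x y. x \<in> carrier_vec n \<Longrightarrow> y \<in> carrier_vec n \<Longrightarrow> ip x (M *\<^sub>v y) = ip (M *\<^sub>v x) y"
  shows "herm n M"
  unfolding herm_def
proof (intro conjI allI impI M)
  fix i j assume i: "i < n" and j: "j < n"
  have "ip (unit_vec n j) (M *\<^sub>v unit_vec n i) = ip (M *\<^sub>v unit_vec n j) (unit_vec n i)"
    by (rule h) auto
  moreover have "ip (unit_vec n j) (M *\<^sub>v unit_vec n i) = M $$ (j,i)"
    using ip_unit_left[OF j, of "M *\<^sub>v unit_vec n i"] mv_unit[OF M j i] M by simp
  moreover have "ip (M *\<^sub>v unit_vec n j) (unit_vec n i) = cnj (M $$ (i,j))"
    using ip_unit_right[OF i, of "M *\<^sub>v unit_vec n j"] mv_unit[OF M i j] M by simp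
  ultimately show "M $$ (j, i) = cnj (M $$ (i, j))" by simp
qed

definition oeig :: "nat \<Rightarrow> complex mat \<Rightarrow> (complex vec \<times> real) list \<Rightarrow> bool" where
  "oeig n M ps \<longleftrightarrow> distinct (map fst ps) \<and>
     (\<forall>p\<in>set ps. fst p \<in> carrier_vec n \<and> M *\<^sub>v fst p = complex_of_real (snd p) \<cdot>\<^sub>v fst p) \<and>
     (\<forall>p\<in>set ps. \<forall>q\<in>set ps. ip (fst p) (fst q) = (if fst p = fst q then 1 else 0))"

lemma oeig_nth:
  assumes "oeig n M ps" "i < length ps" "j < length ps"
  shows "ip (fst (ps!i)) (fst (ps!j)) = (if i = j then 1 else 0)"
proof -
  have d: "distinct (map fst ps)" using assms(1) oeig_def by blast
  have "fst (ps!i) = fst (ps!j) \<longleftrightarrow> i = j"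
    using nth_eq_iff_index_eq[OF d, of i j] assms(2,3) by simp
  moreover have "ip (fst (ps!i)) (fst (ps!j)) = (if fst (ps!i) = fst (ps!j) then 1 else 0)"
    using assms unfolding oeig_def by (meson nth_mem)
  ultimately show ?thesis by simp
qed

lemma oeig_nth_carrier: "oeig n M ps \<Longrightarrow> i < length ps \<Longrightarrow> fst (ps!i) \<in> carrier_vec n"
  unfolding oeig_def by (meson nth_mem)

lemma oeig_nth_eig: "oeig n M ps \<Longrightarrow> i < length ps \<Longrightarrow>
   M *\<^sub>v fst (ps!i) = complex_of_real (snd (ps!i)) \<cdot>\<^sub>v fst (ps!i)"
  unfolding oeig_def by (meson nth_mem)

lemma normalize_eig:
  assumes x: "x \<in> carrier_vec n" and nz: "x \<noteq> 0\<^sub>v n" and M: "M \<in> carrier_mat n n"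
    and ev: "M *\<^sub>v x = complex_of_real a \<cdot>\<^sub>v x"
    and orth: "\<And>v. v \<in> V \<Longrightarrow> ip v x = 0" and V: "V \<subseteq> carrier_vec n"
  shows "\<exists>u. u \<in> carrier_vec n \<and> M *\<^sub>v u = complex_of_real a \<cdot>\<^sub>v u \<and> ip u u = 1 \<and> (\<forall>v\<in>V. ip v u = 0)"
proof -
  define c where "c = 1 / sqrt (nrm2 x)"
  define u where "u = complex_of_real c \<cdot>\<^sub>v x"
  have pos: "nrm2 x > 0" using nrm2_eq0[OF x] nz nrm2_ge0[of x] by linarith
  have u: "u \<in> carrier_vec n" using x u_def by simp
  have "ip u u = complex_of_real c * complex_of_real c * ip x x"
    unfolding u_def by (simp add: ip_smult_left ip_smult_right)
  also have "\<dots> = complex_of_real (c * c * nrm2 x)" unfolding ip_self by simp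
  also have "c * c * nrm2 x = 1" unfolding c_def using pos
    by (simp add: real_sqrt_mult[symmetric] del: real_sqrt_mult)
  finally have uu: "ip u u = 1" by simp
  have "M *\<^sub>v u = complex_of_real c \<cdot>\<^sub>v (M *\<^sub>v x)" unfolding u_def by (rule mult_mat_vec[OF M x])
  also have "\<dots> = complex_of_real a \<cdot>\<^sub>v u" unfolding ev u_def
    by (simp add: smult_smult_assoc mult.commute)
  finally have Mu: "M *\<^sub>v u = complex_of_real a \<cdot>\<^sub>v u" .
  have "ip v u = 0" if "v \<in> V" for v
  proof -
    have "dim_vec x = dim_vec v" using that V x by auto
    thus ?thesis unfolding u_def using ip_smult_right orth[OF that] by simp
  qed
  thus ?thesis using u uu Mu by blast
qed

lemma extend:
  assumes h: "herm n M" and o: "oeig n M ps" and kn: "length ps < n"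
  shows "\<exists>u a. u \<in> carrier_vec n \<and> M *\<^sub>v u = complex_of_real a \<cdot>\<^sub>v u \<and> ip u u = 1
           \<and> (\<forall>p\<in>set ps. ip (fst p) u = 0)"
proof -
  have M: "M \<in> carrier_mat n n" using h unfolding herm_def by blast
  define k where "k = length ps"
  define v where "v = (\<lambda>i. fst (ps!i))"
  have vc: "v i \<in> carrier_vec n" if "i < k" for i
    using oeig_nth_carrier[OF o] that unfolding k_def v_def by blast
  have vo: "ip (v i) (v j) = (if i = j then 1 else 0)" if "i < k" "j < k" for i j
    using oeig_nth[OF o] that unfolding k_def v_def by blast
  have ve: "M *\<^sub>v v i = complex_of_real (snd (ps!i)) \<cdot>\<^sub>v v i" if "i < k" for i
    using oeig_nth_eig[OF o] that unfolding k_def v_def by blast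
  have Sset: "(\<forall>j<k. ip (v j) x = 0) \<longleftrightarrow> (\<forall>p\<in>set ps. ip (fst p) x = 0)" for x
    unfolding v_def k_def by (metis in_set_conv_nth)
  define P where "P = mat n n (\<lambda>(r,s). (if r = s then 1 else 0) - (\<Sum>i<k. v i $ r * cnj (v i $ s)))"
  have P: "P \<in> carrier_mat n n" unfolding P_def by simp
  have Pv: "(P *\<^sub>v x) $ r = x $ r - (\<Sum>i<k. v i $ r * ip (v i) x)"
    if x: "x \<in> carrier_vec n" and r: "r < n" for x r
  proof -
    have "(P *\<^sub>v x) $ r = (\<Sum>s<n. P $$ (r,s) * x $ s)" by (rule mv_idx[OF P x r])
    also have "\<dots> = (\<Sum>s<n. (if r = s then x $ s else 0) - (\<Sum>i<k. v i $ r * (cnj (v i $ s) * x $ s)))"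
      unfolding P_def using r by (intro sum.cong) (auto simp: sum_distrib_right left_diff_distrib mult.assoc)
    also have "\<dots> = x $ r - (\<Sum>s<n. \<Sum>i<k. v i $ r * (cnj (v i $ s) * x $ s))"
      using r by (simp add: sum_subtractf)
    also have "(\<Sum>s<n. \<Sum>i<k. v i $ r * (cnj (v i $ s) * x $ s)) = (\<Sum>i<k. \<Sum>s<n. v i $ r * (cnj (v i $ s) * x $ s))"
      by (rule sum.swap)
    also have "\<dots> = (\<Sum>i<k. v i $ r * ip (v i) x)"
    proof (intro sum.cong refl)
      fix i assume "i \<in> {..<k}"
      hence "dim_vec (v i) = n" using vc by auto
      thus "(\<Sum>s<n. v i $ r * (cnj (v i $ s) * x $ s)) = v i $ r * ip (v i) x"
        unfolding ip_def by (simp add: sum_distrib_left)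
    qed
    finally show ?thesis .
  qed
  have ipP: "ip (v j) (P *\<^sub>v x) = 0" if x: "x \<in> carrier_vec n" and j: "j < k" for x j
  proof -
    have dj: "dim_vec (v j) = n" using vc[OF j] by auto
    have "ip (v j) (P *\<^sub>v x) = (\<Sum>r<n. cnj (v j $ r) * (x $ r - (\<Sum>i<k. v i $ r * ip (v i) x)))"
      unfolding ip_def[of "v j"] dj using Pv[OF x] by (intro sum.cong) auto
    also have "\<dots> = (\<Sum>r<n. cnj (v j $ r) * x $ r) - (\<Sum>r<n. \<Sum>i<k. cnj (v j $ r) * v i $ r * ip (v i) x)"
      by (simp add: right_diff_distrib sum_subtractf sum_distrib_left mult.assoc)
    also have "(\<Sum>r<n. \<Sum>i<k. cnj (v j $ r) * v i $ r * ip (v i) x) = (\<Sum>i<k. \<Sum>r<n. cnj (v j $ r) * v i $ r * ip (v i) x)"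
      by (rule sum.swap)
    also have "\<dots> = (\<Sum>i<k. ip (v j) (v i) * ip (v i) x)"
      unfolding ip_def dj by (simp add: sum_distrib_right)
    also have "\<dots> = (\<Sum>i<k. if i = j then ip (v j) x else 0)"
      using vo j by (intro sum.cong) auto
    also have "\<dots> = ip (v j) x" using j by simp
    finally show ?thesis unfolding ip_def dj by simp
  qed
  have Pfix: "P *\<^sub>v x = x" if x: "x \<in> carrier_vec n" and o0: "\<forall>j<k. ip (v j) x = 0" for x
    using x P o0 by (intro eq_vecI) (auto simp: Pv[OF x] simp del: index_mult_mat_vec)
  have inv: "ip (v j) (M *\<^sub>v x) = 0" if x: "x \<in> carrier_vec n" and o0: "\<forall>j<k. ip (v j) x = 0" and j: "j < k" for x j
  proof -
    have "ip (v j) (M *\<^sub>v x) = ip (M *\<^sub>v v j) x" by (rule herm_ip[OF h vc[OF j] x])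
    also have "\<dots> = cnj (complex_of_real (snd (ps!j))) * ip (v j) x" unfolding ve[OF j] ip_smult_left ..
    finally show ?thesis using o0 j by simp
  qed
  have hP: "herm n P" unfolding herm_def
  proof (intro conjI allI impI P)
    fix i j assume "i < n" "j < n"
    thus "P $$ (j, i) = cnj (P $$ (i, j))" unfolding P_def by (auto simp: mult.commute)
  qed
  define M' where "M' = P * M * P"
  have M': "M' \<in> carrier_mat n n" unfolding M'_def using P M by auto
  have M'v: "M' *\<^sub>v x = P *\<^sub>v (M *\<^sub>v (P *\<^sub>v x))" if "x \<in> carrier_vec n" for x
    unfolding M'_def using P M that by (simp add: assoc_mult_mat_vec[of _ n n _ n])
  have hM': "herm n M'"
  proof (rule herm_of_ip[OF M'])
    fix x y :: "complex vec" assume x: "x \<in> carrier_vec n" and y: "y \<in> carrier_vec n"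
    have "ip x (M' *\<^sub>v y) = ip (P *\<^sub>v x) (M *\<^sub>v (P *\<^sub>v y))" unfolding M'v[OF y]
      using herm_ip[OF hP x, of "M *\<^sub>v (P *\<^sub>v y)"] M P y by simp
    also have "\<dots> = ip (M *\<^sub>v (P *\<^sub>v x)) (P *\<^sub>v y)"
      using herm_ip[OF h, of "P *\<^sub>v x" "P *\<^sub>v y"] P x y by simp
    also have "\<dots> = ip (M' *\<^sub>v x) y" unfolding M'v[OF x]
      using herm_ip[OF hP, of "M *\<^sub>v (P *\<^sub>v x)" y] M P x y by simp
    finally show "ip x (M' *\<^sub>v y) = ip (M' *\<^sub>v x) y" .
  qed
  have Vc: "fst ` set ps \<subseteq> carrier_vec n" using o unfolding oeig_def by auto
  have key: "\<exists>x a. x \<in> carrier_vec n \<and> x \<noteq> 0\<^sub>v n \<and> M *\<^sub>v x = complex_of_real a \<cdot>\<^sub>v x \<and> (\<forall>j<k. ip (v j) x = 0)"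
  proof (cases "\<exists>e. eigenvalue M' e \<and> e \<noteq> 0")
    case True
    then obtain e w where e0: "e \<noteq> 0" and ew: "eigenvector M' w e" unfolding eigenvalue_def by blast
    have w: "w \<in> carrier_vec n" and wnz: "w \<noteq> 0\<^sub>v n" and M'w: "M' *\<^sub>v w = e \<cdot>\<^sub>v w"
      using ew M' unfolding eigenvector_def by auto
    have weq: "w = (1/e) \<cdot>\<^sub>v (P *\<^sub>v (M *\<^sub>v (P *\<^sub>v w)))"
      using M'w[unfolded M'v[OF w]] e0 w by (simp add: smult_smult_assoc)
    have ow: "\<forall>j<k. ip (v j) w = 0"
    proof (intro allI impI)
      fix j assume j: "j < k"
      have "ip (v j) w = (1/e) * ip (v j) (P *\<^sub>v (M *\<^sub>v (P *\<^sub>v w)))"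
        using vc[OF j] P M w by (subst weq) (simp add: ip_smult_right)
      also have "\<dots> = 0" using ipP[of "M *\<^sub>v (P *\<^sub>v w)" j] j P M w by simp
      finally show "ip (v j) w = 0" .
    qed
    have Pw: "P *\<^sub>v w = w" by (rule Pfix[OF w ow])
    have PMw: "P *\<^sub>v (M *\<^sub>v w) = M *\<^sub>v w" using inv[OF w ow] M w by (intro Pfix) auto
    have Mw: "M *\<^sub>v w = e \<cdot>\<^sub>v w" using M'w unfolding M'v[OF w] Pw PMw .
    have pos: "nrm2 w > 0" using nrm2_eq0[OF w] wnz nrm2_ge0[of w] by linarith
    have "ip w (M *\<^sub>v w) = e * complex_of_real (nrm2 w)" unfolding Mw using w
      by (simp add: ip_smult_right ip_self)
    hence "e = ip w (M *\<^sub>v w) / complex_of_real (nrm2 w)" using pos by simp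
    also have "\<dots> = complex_of_real (Re (ip w (M *\<^sub>v w)) / nrm2 w)"
      by (subst herm_qf_real[OF h w]) simp
    finally have "e = complex_of_real (Re (ip w (M *\<^sub>v w)) / nrm2 w)" .
    thus ?thesis using w wnz Mw ow by blast
  next
    case False
    hence "M' = 0\<^sub>m n n" using herm_nil2[OF hM'] by blast
    moreover obtain x where x: "x \<in> carrier_vec n" "x \<noteq> 0\<^sub>v n" and ox: "\<forall>f\<in>set (map fst ps). ip f x = 0"
      using kernel_exists[of "map fst ps" n] Vc kn by auto
    have ox': "\<forall>j<k. ip (v j) x = 0" using ox Sset by simp
    have Px: "P *\<^sub>v x = x" by (rule Pfix[OF x(1) ox'])
    have PMx: "P *\<^sub>v (M *\<^sub>v x) = M *\<^sub>v x" using inv[OF x(1) ox'] M x by (intro Pfix) auto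
    have z: "0\<^sub>m n n *\<^sub>v x = (0\<^sub>v n :: complex vec)"
      by (intro eq_vecI) (auto simp: mv_idx[OF _ x(1)] simp del: index_mult_mat_vec)
    ultimately have "M *\<^sub>v x = 0\<^sub>v n" using M'v[OF x(1)] unfolding Px PMx using x z by simp
    hence "M *\<^sub>v x = complex_of_real 0 \<cdot>\<^sub>v x" using x by auto
    thus ?thesis using x ox' by blast
  qed
  then obtain x a where x: "x \<in> carrier_vec n" "x \<noteq> 0\<^sub>v n" "M *\<^sub>v x = complex_of_real a \<cdot>\<^sub>v x"
    and ox: "\<forall>j<k. ip (v j) x = 0" by blast
  have "\<And>f. f \<in> fst ` set ps \<Longrightarrow> ip f x = 0" using ox Sset by auto
  from normalize_eig[OF x(1,2) M x(3) this Vc] show ?thesis by auto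
qed

lemma oeig_exists: assumes h: "herm n M" shows "k \<le> n \<Longrightarrow> \<exists>ps. oeig n M ps \<and> length ps = k"
proof (induction k)
  case 0 thus ?case by (intro exI[of _ "[]"]) (simp add: oeig_def)
next
  case (Suc k)
  then obtain ps where o: "oeig n M ps" and l: "length ps = k" by auto
  from extend[OF h o] l Suc.prems obtain u a where u: "u \<in> carrier_vec n"
    and Mu: "M *\<^sub>v u = complex_of_real a \<cdot>\<^sub>v u" and uu: "ip u u = 1"
    and ou: "\<forall>p\<in>set ps. ip (fst p) u = 0" by auto
  have notin: "u \<notin> fst ` set ps" using ou uu by force
  have ou2: "ip u (fst p) = 0" if "p \<in> set ps" for p
  proof -
    have "fst p \<in> carrier_vec n" using o that unfolding oeig_def by blast
    hence "cnj (ip (fst p) u) = ip u (fst p)" using u by (intro ip_cnj) auto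
    thus ?thesis using ou that by simp
  qed
  have "oeig n M (ps @ [(u,a)])"
    unfolding oeig_def
  proof (intro conjI)
    show "distinct (map fst (ps @ [(u, a)]))" using o notin unfolding oeig_def by auto
    show "\<forall>p\<in>set (ps @ [(u, a)]). fst p \<in> carrier_vec n \<and> M *\<^sub>v fst p = complex_of_real (snd p) \<cdot>\<^sub>v fst p"
      using o u Mu unfolding oeig_def by auto
    show "\<forall>p\<in>set (ps @ [(u, a)]). \<forall>q\<in>set (ps @ [(u, a)]). ip (fst p) (fst q) = (if fst p = fst q then 1 else 0)"
    proof (intro ballI)
      fix p q assume p: "p \<in> set (ps @ [(u, a)])" and q: "q \<in> set (ps @ [(u, a)])"
      show "ip (fst p) (fst q) = (if fst p = fst q then 1 else 0)"
      proof (cases "p \<in> set ps")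
        case pin: True
        show ?thesis
        proof (cases "q \<in> set ps")
          case True thus ?thesis using o pin unfolding oeig_def by blast
        next
          case False hence "q = (u,a)" using q by auto
          moreover have "fst p \<noteq> u" using pin notin by force
          ultimately show ?thesis using ou pin by simp
        qed
      next
        case False hence pu: "p = (u,a)" using p by auto
        show ?thesis
        proof (cases "q \<in> set ps")
          case True
          have "fst q \<noteq> u" using True notin by force
          thus ?thesis using ou2[OF True] pu by simp
        next
          case False hence "q = (u,a)" using q by auto
          thus ?thesis using pu uu by simp
        qed
      qed
    qed
  qed
  thus ?case using l by (intro exI[of _ "ps @ [(u,a)]"]) auto
qed

lemma oeig_sort: assumes "oeig n M ps" shows "oeig n M (sort_key snd ps)"
proof -
  have "mset (map fst (sort_key snd ps)) = mset (map fst ps)" by simp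
  hence "distinct (map fst (sort_key snd ps)) = distinct (map fst ps)"
    by (rule mset_eq_imp_distinct_iff)
  thus ?thesis using assms unfolding oeig_def by simp
qed

lemma proots_linprod: "proots (\<Prod>a\<leftarrow>xs. [:- a, 1:]) = mset (xs :: complex list)"
proof (induction xs)
  case (Cons x xs)
  have "(\<Prod>a\<leftarrow>xs. [:- a, 1:]) \<noteq> 0" by (auto simp: prod_list_zero_iff)
  moreover have "[:- x, 1:] \<noteq> 0" by simp
  ultimately have "proots ([:- x, 1:] * (\<Prod>a\<leftarrow>xs. [:- a, 1:])) = proots [:- x, 1:] + proots (\<Prod>a\<leftarrow>xs. [:- a, 1:])"
    by (intro proots_mult) auto
  moreover have "proots [:- x, 1:] = {#x#}" using proots_linear_factor[of "-x"] by simp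
  ultimately show ?case using Cons by (simp only: prod_list.Cons list.map mset.simps) simp
qed simp

lemma onb_char_poly:
  assumes o: "oeig n M ps" and l: "length ps = n" and M: "M \<in> carrier_mat n n"
  shows "char_poly M = (\<Prod>a\<leftarrow>map (complex_of_real \<circ> snd) ps. [:- a, 1:])"
proof -
  define u where "u = (\<lambda>i. fst (ps!i))"
  define mu where "mu = (\<lambda>i. snd (ps!i))"
  have uc: "u i \<in> carrier_vec n" if "i < n" for i using oeig_nth_carrier[OF o] that l u_def by auto
  have uo: "ip (u i) (u j) = (if i = j then 1 else 0)" if "i < n" "j < n" for i j
    using oeig_nth[OF o] that l u_def by auto
  have ue: "M *\<^sub>v u i = complex_of_real (mu i) \<cdot>\<^sub>v u i" if "i < n" for i
    using oeig_nth_eig[OF o] that l u_def mu_def by auto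
  define U where "U = mat n n (\<lambda>(r,i). u i $ r)"
  define Uh where "Uh = mat n n (\<lambda>(i,r). cnj (u i $ r))"
  define D where "D = mat n n (\<lambda>(i,j). if i = j then complex_of_real (mu i) else 0)"
  have U: "U \<in> carrier_mat n n" and Uh: "Uh \<in> carrier_mat n n" and D: "D \<in> carrier_mat n n"
    unfolding U_def Uh_def D_def by auto
  have UhU: "Uh * U = 1\<^sub>m n"
  proof (rule eq_matI)
    fix i j assume "i < dim_row (1\<^sub>m n :: complex mat)" "j < dim_col (1\<^sub>m n :: complex mat)"
    hence i: "i < n" and j: "j < n" by auto
    have "(Uh * U) $$ (i,j) = (\<Sum>r<n. cnj (u i $ r) * u j $ r)"
      using mm_idx[OF Uh U i j] unfolding Uh_def U_def using i j by (simp)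
    also have "\<dots> = ip (u i) (u j)" unfolding ip_def using uc[OF i] by simp
    finally show "(Uh * U) $$ (i,j) = 1\<^sub>m n $$ (i,j)" using uo[OF i j] i j by simp
  qed (use Uh U in auto)
  have UUh: "U * Uh = 1\<^sub>m n" by (rule mat_mult_left_right_inverse[OF Uh U UhU])
  have MU: "M * U = U * D"
  proof (rule eq_matI)
    fix r l assume "r < dim_row (U * D)" "l < dim_col (U * D)"
    hence r: "r < n" and l': "l < n" using U D by auto
    have "(M * U) $$ (r,l) = (\<Sum>t<n. M $$ (r,t) * u l $ t)"
      using mm_idx[OF M U r l'] unfolding U_def using r l' by simp
    also have "\<dots> = (M *\<^sub>v u l) $ r" using mv_idx[OF M uc[OF l'] r] by simp
    also have "\<dots> = complex_of_real (mu l) * u l $ r" unfolding ue[OF l'] using uc[OF l'] r by simp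
    also have "\<dots> = (\<Sum>i<n. U $$ (r,i) * D $$ (i,l))"
    proof -
      have "(\<Sum>i<n. U $$ (r,i) * D $$ (i,l)) = (\<Sum>i<n. if i = l then u l $ r * complex_of_real (mu l) else 0)"
        unfolding U_def D_def using r l' by (intro sum.cong) auto
      thus ?thesis using l' by (simp add: mult.commute)
    qed
    also have "\<dots> = (U * D) $$ (r,l)" using mm_idx[OF U D r l'] by simp
    finally show "(M * U) $$ (r,l) = (U * D) $$ (r,l)" .
  qed (use M U D in auto)
  have MUDU: "M = U * D * Uh"
  proof -
    have "M = M * (U * Uh)" using UUh M by simp
    also have "\<dots> = (M * U) * Uh" using M U Uh by (simp add: assoc_mult_mat[of _ n n _ n _ n])
    finally show ?thesis unfolding MU .
  qed
  have "similar_mat M D" unfolding similar_mat_def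
    by (intro exI[of _ U] exI[of _ Uh] similar_mat_witI[OF UUh UhU MUDU M D U Uh])
  hence "char_poly M = char_poly D" by (rule char_poly_similar)
  also have "\<dots> = (\<Prod>a\<leftarrow>diag_mat D. [:- a, 1:])"
  proof (rule char_poly_upper_triangular[OF D])
    show "upper_triangular D" unfolding upper_triangular_def D_def by auto
  qed
  also have "diag_mat D = map (complex_of_real \<circ> snd) ps"
    unfolding diag_mat_def D_def mu_def using l by (intro nth_equalityI) auto
  finally show ?thesis .
qed

lemma spectral:
  assumes h: "herm n M"
  shows "\<exists>ps. oeig n M ps \<and> length ps = n \<and> eigenvalues_sorted M = map snd ps"
proof -
  have M: "M \<in> carrier_mat n n" using h unfolding herm_def by blast
  obtain ps0 where o0: "oeig n M ps0" and l0: "length ps0 = n" using oeig_exists[OF h, of n] by auto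
  define ps where "ps = sort_key snd ps0"
  have o: "oeig n M ps" unfolding ps_def by (rule oeig_sort[OF o0])
  have l: "length ps = n" unfolding ps_def using l0 by simp
  have s: "sorted (map snd ps)" unfolding ps_def by simp
  have "eigenvalues_sorted M = sorted_list_of_multiset (image_mset Re (mset (map (complex_of_real \<circ> snd) ps)))"
    unfolding eigenvalues_sorted_def onb_char_poly[OF o l M] proots_linprod ..
  also have "image_mset Re (mset (map (complex_of_real \<circ> snd) ps)) = mset (map snd ps)"
    by (simp add: multiset.map_comp comp_def)
  also have "sorted_list_of_multiset (mset (map snd ps)) = map snd ps"
    by (simp only: sorted_list_of_multiset_mset sorted_sort_id[OF s])
  finally show ?thesis using o l by blast
qed

definition sonb :: "nat \<Rightarrow> complex mat \<Rightarrow> (complex vec \<times> real) list \<Rightarrow> bool" where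
  "sonb n M ps \<longleftrightarrow> oeig n M ps \<and> length ps = n \<and> sorted (map snd ps)"

lemma spectral2: "herm n M \<Longrightarrow> \<exists>ps. sonb n M ps \<and> eigenvalues_sorted M = map snd ps"
  using spectral[of n M] unfolding sonb_def by (metis sorted_sort_id sorted_list_of_multiset_mset eigenvalues_sorted_def sorted_sorted_list_of_multiset)

lemma sonb_mono: "sonb n M ps \<Longrightarrow> i \<le> j \<Longrightarrow> j < n \<Longrightarrow> snd (ps!i) \<le> snd (ps!j)"
  unfolding sonb_def using sorted_nth_mono[of "map snd ps" i j] by auto

lemma onb_complete:
  assumes o: "oeig n M ps" and l: "length ps = n" and r: "r < n" and s: "s < n"
  shows "(\<Sum>i<n. fst (ps!i) $ r * cnj (fst (ps!i) $ s)) = (if r = s then 1 else 0)"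
proof -
  define u where "u = (\<lambda>i. fst (ps!i))"
  have uc: "u i \<in> carrier_vec n" if "i < n" for i using oeig_nth_carrier[OF o] that l u_def by auto
  have uo: "ip (u i) (u j) = (if i = j then 1 else 0)" if "i < n" "j < n" for i j
    using oeig_nth[OF o] that l u_def by auto
  define U where "U = mat n n (\<lambda>(r,i). u i $ r)"
  define Uh where "Uh = mat n n (\<lambda>(i,r). cnj (u i $ r))"
  have U: "U \<in> carrier_mat n n" and Uh: "Uh \<in> carrier_mat n n"
    unfolding U_def Uh_def by auto
  have UhU: "Uh * U = 1\<^sub>m n"
  proof (rule eq_matI)
    fix i j assume "i < dim_row (1\<^sub>m n :: complex mat)" "j < dim_col (1\<^sub>m n :: complex mat)"
    hence i: "i < n" and j: "j < n" by auto
    have "(Uh * U) $$ (i,j) = (\<Sum>r<n. cnj (u i $ r) * u j $ r)"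
      using mm_idx[OF Uh U i j] unfolding Uh_def U_def using i j by (simp)
    also have "\<dots> = ip (u i) (u j)" unfolding ip_def using uc[OF i] by simp
    finally show "(Uh * U) $$ (i,j) = 1\<^sub>m n $$ (i,j)" using uo[OF i j] i j by simp
  qed (use Uh U in auto)
  have UUh: "U * Uh = 1\<^sub>m n" by (rule mat_mult_left_right_inverse[OF Uh U UhU])
  have "(U * Uh) $$ (r,s) = (\<Sum>i<n. u i $ r * cnj (u i $ s))"
    using mm_idx[OF U Uh r s] unfolding U_def Uh_def using r s by simp
  thus ?thesis unfolding UUh u_def using r s by simp
qed

lemma onb_expand:
  assumes o: "oeig n M ps" and l: "length ps = n" and x: "x \<in> carrier_vec n" and r: "r < n"
  shows "x $ r = (\<Sum>i<n. ip (fst (ps!i)) x * fst (ps!i) $ r)"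
proof -
  have uc: "fst (ps!i) \<in> carrier_vec n" if "i < n" for i using oeig_nth_carrier[OF o] that l by auto
  have "x $ r = (\<Sum>s<n. (if r = s then 1 else 0) * x $ s)"
  proof -
    have "(\<Sum>s<n. (if r = s then 1 else 0) * x $ s) = (\<Sum>s<n. if r = s then x $ s else 0)"
      by (intro sum.cong) auto
    thus ?thesis using r by simp
  qed
  also have "\<dots> = (\<Sum>s<n. (\<Sum>i<n. fst (ps!i) $ r * cnj (fst (ps!i) $ s)) * x $ s)"
    using onb_complete[OF o l r] by simp
  also have "\<dots> = (\<Sum>s<n. \<Sum>i<n. fst (ps!i) $ r * cnj (fst (ps!i) $ s) * x $ s)"
    by (simp add: sum_distrib_right)
  also have "\<dots> = (\<Sum>i<n. \<Sum>s<n. fst (ps!i) $ r * cnj (fst (ps!i) $ s) * x $ s)"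
    by (rule sum.swap)
  also have "\<dots> = (\<Sum>i<n. ip (fst (ps!i)) x * fst (ps!i) $ r)"
  proof (intro sum.cong refl)
    fix i assume "i \<in> {..<n}"
    hence "dim_vec (fst (ps!i)) = n" using uc by auto
    thus "(\<Sum>s<n. fst (ps!i) $ r * cnj (fst (ps!i) $ s) * x $ s) = ip (fst (ps!i)) x * fst (ps!i) $ r"
      unfolding ip_def by (simp add: sum_distrib_left sum_distrib_right mult.assoc mult.commute mult.left_commute)
  qed
  finally show ?thesis .
qed

lemma onb_ip_expand:
  assumes o: "oeig n M ps" and l: "length ps = n" and x: "x \<in> carrier_vec n" and y: "y \<in> carrier_vec n"
  shows "ip x y = (\<Sum>i<n. cnj (ip (fst (ps!i)) x) * ip (fst (ps!i)) y)"
proof -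
  have uc: "fst (ps!i) \<in> carrier_vec n" if "i < n" for i using oeig_nth_carrier[OF o] that l by auto
  have "ip x y = (\<Sum>r<n. cnj (x $ r) * (\<Sum>i<n. ip (fst (ps!i)) y * fst (ps!i) $ r))"
    unfolding ip_def[of x] using x onb_expand[OF o l y] by (intro sum.cong) auto
  also have "\<dots> = (\<Sum>r<n. \<Sum>i<n. cnj (x $ r) * (ip (fst (ps!i)) y * fst (ps!i) $ r))"
    by (simp add: sum_distrib_left)
  also have "\<dots> = (\<Sum>i<n. \<Sum>r<n. cnj (x $ r) * (ip (fst (ps!i)) y * fst (ps!i) $ r))"
    by (rule sum.swap)
  also have "\<dots> = (\<Sum>i<n. cnj (ip (fst (ps!i)) x) * ip (fst (ps!i)) y)"
  proof (intro sum.cong refl)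
    fix i assume "i \<in> {..<n}"
    hence d: "dim_vec (fst (ps!i)) = n" using uc by auto
    have "cnj (ip (fst (ps!i)) x) = (\<Sum>r<n. fst (ps!i) $ r * cnj (x $ r))"
      unfolding ip_def d by simp
    thus "(\<Sum>r<n. cnj (x $ r) * (ip (fst (ps!i)) y * fst (ps!i) $ r)) = cnj (ip (fst (ps!i)) x) * ip (fst (ps!i)) y"
      by (simp add: sum_distrib_left mult.commute mult.left_commute)
  qed
  finally show ?thesis .
qed

lemma cnj_mult_self: "cnj z * z = complex_of_real ((cmod z)^2)"
  using complex_norm_square[of z] by (simp add: mult.commute)

lemma onb_nrm2:
  assumes o: "oeig n M ps" and l: "length ps = n" and x: "x \<in> carrier_vec n"
  shows "nrm2 x = (\<Sum>i<n. (cmod (ip (fst (ps!i)) x))^2)"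
proof -
  have "complex_of_real (nrm2 x) = (\<Sum>i<n. complex_of_real ((cmod (ip (fst (ps!i)) x))^2))"
    unfolding ip_self[symmetric] onb_ip_expand[OF o l x x] cnj_mult_self ..
  thus ?thesis unfolding of_real_sum[symmetric] of_real_eq_iff .
qed

lemma onb_qf:
  assumes h: "herm n M" and o: "oeig n M ps" and l: "length ps = n" and x: "x \<in> carrier_vec n"
  shows "Re (ip x (M *\<^sub>v x)) = (\<Sum>i<n. snd (ps!i) * (cmod (ip (fst (ps!i)) x))^2)"
proof -
  have M: "M \<in> carrier_mat n n" using h unfolding herm_def by blast
  have uc: "fst (ps!i) \<in> carrier_vec n" if "i < n" for i using oeig_nth_carrier[OF o] that l by auto
  have "ip x (M *\<^sub>v x) = (\<Sum>i<n. cnj (ip (fst (ps!i)) x) * ip (fst (ps!i)) (M *\<^sub>v x))"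
    using onb_ip_expand[OF o l x, of "M *\<^sub>v x"] M x by simp
  also have "\<dots> = (\<Sum>i<n. complex_of_real (snd (ps!i) * (cmod (ip (fst (ps!i)) x))^2))"
  proof (intro sum.cong refl)
    fix i assume "i \<in> {..<n}"
    hence i: "i < n" by simp
    have "ip (fst (ps!i)) (M *\<^sub>v x) = ip (M *\<^sub>v fst (ps!i)) x" by (rule herm_ip[OF h uc[OF i] x])
    also have "\<dots> = complex_of_real (snd (ps!i)) * ip (fst (ps!i)) x"
      unfolding oeig_nth_eig[OF o i[folded l]] ip_smult_left by simp
    finally show "cnj (ip (fst (ps!i)) x) * ip (fst (ps!i)) (M *\<^sub>v x) = complex_of_real (snd (ps!i) * (cmod (ip (fst (ps!i)) x))^2)"
      using cnj_mult_self[of "ip (fst (ps!i)) x"] by (simp add: mult.left_commute)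
  qed
  finally show ?thesis by (simp only: of_real_sum[symmetric] Re_complex_of_real)
qed

lemma rayleigh_upper:
  assumes h: "herm n M" and so: "sonb n M ps" and x: "x \<in> carrier_vec n"
    and k: "k < n" and z: "\<And>i. i < n \<Longrightarrow> k < i \<Longrightarrow> ip (fst (ps!i)) x = 0"
  shows "Re (ip x (M *\<^sub>v x)) \<le> snd (ps!k) * nrm2 x"
proof -
  have o: "oeig n M ps" and l: "length ps = n" using so sonb_def by auto
  have "Re (ip x (M *\<^sub>v x)) = (\<Sum>i<n. snd (ps!i) * (cmod (ip (fst (ps!i)) x))^2)" by (rule onb_qf[OF h o l x])
  also have "\<dots> \<le> (\<Sum>i<n. snd (ps!k) * (cmod (ip (fst (ps!i)) x))^2)"
  proof (intro sum_mono)
    fix i assume "i \<in> {..<n}"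
    hence i: "i < n" by simp
    show "snd (ps!i) * (cmod (ip (fst (ps!i)) x))^2 \<le> snd (ps!k) * (cmod (ip (fst (ps!i)) x))^2"
    proof (cases "k < i")
      case True thus ?thesis using z[OF i] by simp
    next
      case False thus ?thesis using sonb_mono[OF so, of i k] k by (intro mult_right_mono) auto
    qed
  qed
  also have "\<dots> = snd (ps!k) * nrm2 x" unfolding onb_nrm2[OF o l x] by (simp add: sum_distrib_left)
  finally show ?thesis .
qed

lemma rayleigh_lower:
  assumes h: "herm n M" and so: "sonb n M ps" and x: "x \<in> carrier_vec n"
    and k: "k < n" and z: "\<And>i. i < k \<Longrightarrow> ip (fst (ps!i)) x = 0"
  shows "snd (ps!k) * nrm2 x \<le> Re (ip x (M *\<^sub>v x))"
proof -
  have o: "oeig n M ps" and l: "length ps = n" using so sonb_def by auto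
  have "snd (ps!k) * nrm2 x = (\<Sum>i<n. snd (ps!k) * (cmod (ip (fst (ps!i)) x))^2)"
    unfolding onb_nrm2[OF o l x] by (simp add: sum_distrib_left)
  also have "\<dots> \<le> (\<Sum>i<n. snd (ps!i) * (cmod (ip (fst (ps!i)) x))^2)"
  proof (intro sum_mono)
    fix i assume "i \<in> {..<n}"
    hence i: "i < n" by simp
    show "snd (ps!k) * (cmod (ip (fst (ps!i)) x))^2 \<le> snd (ps!i) * (cmod (ip (fst (ps!i)) x))^2"
    proof (cases "i < k")
      case True thus ?thesis using z by simp
    next
      case False thus ?thesis using sonb_mono[OF so, of k i] i by (intro mult_right_mono) auto
    qed
  qed
  also have "\<dots> = Re (ip x (M *\<^sub>v x))" by (rule onb_qf[OF h o l x, symmetric])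
  finally show ?thesis .
qed

lemma weyl:
  assumes h1: "herm n M1" and h2: "herm n M2" and so1: "sonb n M1 ps1" and so2: "sonb n M2 ps2"
    and k: "k < n"
    and ineq: "\<And>x. x \<in> carrier_vec n \<Longrightarrow> Re (ip x (M1 *\<^sub>v x)) \<le> Re (ip x (M2 *\<^sub>v x)) + c * nrm2 x"
  shows "snd (ps1!k) \<le> snd (ps2!k) + c"
proof -
  have o1: "oeig n M1 ps1" and l1: "length ps1 = n" and o2: "oeig n M2 ps2" and l2: "length ps2 = n"
    using so1 so2 sonb_def by auto
  define fs where "fs = map fst (take k ps1) @ map fst (drop (Suc k) ps2)"
  have lfs: "length fs < n" unfolding fs_def using k l1 l2 by simp
  have cfs: "set fs \<subseteq> carrier_vec n" unfolding fs_def using o1 o2 unfolding oeig_def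
    by (auto dest: in_set_takeD in_set_dropD)
  obtain x where x: "x \<in> carrier_vec n" "x \<noteq> 0\<^sub>v n" and ox: "\<forall>f\<in>set fs. ip f x = 0"
    using kernel_exists[OF cfs lfs] by auto
  have z1: "ip (fst (ps1!i)) x = 0" if i: "i < k" for i
  proof -
    have "take k ps1 ! i = ps1 ! i" using i by simp
    moreover have "i < length (take k ps1)" using i k l1 by simp
    ultimately have "ps1 ! i \<in> set (take k ps1)" by (metis nth_mem)
    hence "fst (ps1!i) \<in> set fs" unfolding fs_def by auto
    thus ?thesis using ox by auto
  qed
  have z2: "ip (fst (ps2!i)) x = 0" if i: "i < n" "k < i" for i
  proof -
    have "drop (Suc k) ps2 ! (i - Suc k) = ps2 ! i" using i l2 by simp
    moreover have "i - Suc k < length (drop (Suc k) ps2)" using i l2 by simp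
    ultimately have "ps2 ! i \<in> set (drop (Suc k) ps2)" by (metis nth_mem)
    hence "fst (ps2!i) \<in> set fs" unfolding fs_def by auto
    thus ?thesis using ox by auto
  qed
  have pos: "nrm2 x > 0" using nrm2_eq0[OF x(1)] x(2) nrm2_ge0[of x] by linarith
  have "snd (ps1!k) * nrm2 x \<le> Re (ip x (M1 *\<^sub>v x))" by (rule rayleigh_lower[OF h1 so1 x(1) k z1])
  also have "\<dots> \<le> Re (ip x (M2 *\<^sub>v x)) + c * nrm2 x" by (rule ineq[OF x(1)])
  also have "Re (ip x (M2 *\<^sub>v x)) \<le> snd (ps2!k) * nrm2 x" by (rule rayleigh_upper[OF h2 so2 x(1) k z2])
  finally have "snd (ps1!k) * nrm2 x \<le> (snd (ps2!k) + c) * nrm2 x" by (simp add: algebra_simps)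
  thus ?thesis using pos by simp
qed

lemma eigval_qf:
  assumes so: "sonb n M ps" and i: "i < n"
  shows "snd (ps!i) = Re (ip (fst (ps!i)) (M *\<^sub>v fst (ps!i)))" and "nrm2 (fst (ps!i)) = 1"
proof -
  have o: "oeig n M ps" and l: "length ps = n" using so sonb_def by auto
  have uu: "ip (fst (ps!i)) (fst (ps!i)) = 1" using oeig_nth[OF o, of i i] i l by simp
  have uc: "fst (ps!i) \<in> carrier_vec n" using oeig_nth_carrier[OF o] i l by auto
  show "snd (ps!i) = Re (ip (fst (ps!i)) (M *\<^sub>v fst (ps!i)))"
    unfolding oeig_nth_eig[OF o i[folded l]] using uc uu by (simp add: ip_smult_right)
  show "nrm2 (fst (ps!i)) = 1" using uu unfolding ip_self by simp
qed

lemma max_eigvec: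
  assumes h: "herm n M" and so: "sonb n M ps" and n: "0 < n" and x: "x \<in> carrier_vec n"
    and eq: "Re (ip x (M *\<^sub>v x)) = snd (ps!(n-1)) * nrm2 x"
  shows "M *\<^sub>v x = complex_of_real (snd (ps!(n-1))) \<cdot>\<^sub>v x"
proof -
  have o: "oeig n M ps" and l: "length ps = n" using so sonb_def by auto
  have M: "M \<in> carrier_mat n n" using h unfolding herm_def by blast
  define m where "m = snd (ps!(n-1))"
  define c where "c = (\<lambda>i. ip (fst (ps!i)) x)"
  have uc: "fst (ps!i) \<in> carrier_vec n" if "i < n" for i using oeig_nth_carrier[OF o] that l by auto
  have le: "snd (ps!i) \<le> m" if "i < n" for i unfolding m_def using sonb_mono[OF so, of i "n-1"] that n by auto
  have "(\<Sum>i<n. (m - snd (ps!i)) * (cmod (c i))^2) = m * nrm2 x - Re (ip x (M *\<^sub>v x))"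
    unfolding onb_qf[OF h o l x] onb_nrm2[OF o l x] c_def
    by (simp add: sum_distrib_left left_diff_distrib sum_subtractf)
  also have "\<dots> = 0" using eq m_def by simp
  finally have "(\<Sum>i<n. (m - snd (ps!i)) * (cmod (c i))^2) = 0" .
  hence zero: "(m - snd (ps!i)) * (cmod (c i))^2 = 0" if "i < n" for i
    using that le by (subst (asm) sum_nonneg_eq_0_iff) auto
  have cm: "c i * complex_of_real (snd (ps!i)) = c i * complex_of_real m" if "i < n" for i
    using zero[OF that] by auto
  have ipMx: "ip (fst (ps!i)) (M *\<^sub>v x) = complex_of_real (snd (ps!i)) * c i" if i: "i < n" for i
  proof -
    have "ip (fst (ps!i)) (M *\<^sub>v x) = ip (M *\<^sub>v fst (ps!i)) x" by (rule herm_ip[OF h uc[OF i] x])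
    also have "\<dots> = complex_of_real (snd (ps!i)) * c i"
      unfolding oeig_nth_eig[OF o i[folded l]] ip_smult_left c_def by simp
    finally show ?thesis .
  qed
  show ?thesis
  proof (rule eq_vecI)
    fix r assume "r < dim_vec (complex_of_real (snd (ps!(n-1))) \<cdot>\<^sub>v x)"
    hence r: "r < n" using x by simp
    have "(M *\<^sub>v x) $ r = (\<Sum>i<n. ip (fst (ps!i)) (M *\<^sub>v x) * fst (ps!i) $ r)"
      by (rule onb_expand[OF o l _ r]) (use M x in auto)
    also have "\<dots> = (\<Sum>i<n. complex_of_real m * (c i * fst (ps!i) $ r))"
      using ipMx cm by (intro sum.cong refl) (simp add: mult.commute mult.left_commute)
    also have "\<dots> = complex_of_real m * x $ r"
      unfolding onb_expand[OF o l x r] c_def by (simp add: sum_distrib_left)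
    finally show "(M *\<^sub>v x) $ r = (complex_of_real (snd (ps!(n-1))) \<cdot>\<^sub>v x) $ r"
      using r x m_def by simp
  qed (use M x in simp)
qed

lemma amgm1: "(a::real) * b \<le> (a^2 + b^2) / 2"
proof -
  have "0 \<le> (a - b)^2" by simp
  thus ?thesis by (simp add: power2_eq_square algebra_simps)
qed

lemma qf_bound:
  assumes M: "M \<in> carrier_mat n n" and b: "\<And>r s. r < n \<Longrightarrow> s < n \<Longrightarrow> cmod (M $$ (r,s)) \<le> 1"
    and x: "x \<in> carrier_vec n"
  shows "\<bar>Re (ip x (M *\<^sub>v x))\<bar> \<le> real n * nrm2 x"
proof -
  have "ip x (M *\<^sub>v x) = (\<Sum>r<n. \<Sum>s<n. cnj (x $ r) * M $$ (r,s) * x $ s)"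
    unfolding ip_def using x M by (simp add: mv_idx sum_distrib_left mult.assoc del: index_mult_mat_vec)
  hence "\<bar>Re (ip x (M *\<^sub>v x))\<bar> \<le> cmod (\<Sum>r<n. \<Sum>s<n. cnj (x $ r) * M $$ (r,s) * x $ s)"
    using abs_Re_le_cmod[of "ip x (M *\<^sub>v x)"] by (simp only:)
  also have "\<dots> \<le> (\<Sum>r<n. cmod (\<Sum>s<n. cnj (x $ r) * M $$ (r,s) * x $ s))" by (rule norm_sum)
  also have "\<dots> \<le> (\<Sum>r<n. \<Sum>s<n. cmod (cnj (x $ r) * M $$ (r,s) * x $ s))"
    by (intro sum_mono norm_sum)
  also have "\<dots> \<le> (\<Sum>r<n. \<Sum>s<n. ((cmod (x $ r))^2 + (cmod (x $ s))^2) / 2)"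
  proof (intro sum_mono)
    fix r s assume r: "r \<in> {..<n}" and s: "s \<in> {..<n}"
    have "cmod (cnj (x $ r) * M $$ (r,s) * x $ s) = cmod (x $ r) * cmod (M $$ (r,s)) * cmod (x $ s)"
      by (simp add: norm_mult)
    also have "\<dots> \<le> cmod (x $ r) * 1 * cmod (x $ s)"
      using b r s by (intro mult_right_mono mult_left_mono) auto
    also have "\<dots> \<le> ((cmod (x $ r))^2 + (cmod (x $ s))^2) / 2"
      using amgm1[of "cmod (x $ r)" "cmod (x $ s)"] by simp
    finally show "cmod (cnj (x $ r) * M $$ (r,s) * x $ s) \<le> ((cmod (x $ r))^2 + (cmod (x $ s))^2) / 2" .
  qed
  also have "\<dots> = real n * nrm2 x"
    unfolding nrm2_def using x
    by (simp add: sum.distrib add_divide_distrib sum_divide_distrib[symmetric] sum_distrib_left)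
  finally show ?thesis .
qed

lemma adj_carrier: "adjacency_matrix N E \<in> carrier_mat N N"
  unfolding adjacency_matrix_def by simp

lemma adj_idx: "i < N \<Longrightarrow> j < N \<Longrightarrow> adjacency_matrix N E $$ (i,j) = (if E i j then 1 else 0)"
  unfolding adjacency_matrix_def by simp

lemma mp_carrier: "marked_projector N W \<in> carrier_mat N N"
  unfolding marked_projector_def by simp

lemma mp_idx: "i < N \<Longrightarrow> j < N \<Longrightarrow> marked_projector N W $$ (i,j) = (if i = j \<and> i \<in> W then 1 else 0)"
  unfolding marked_projector_def by simp

lemma sh_carrier: "search_hamiltonian N E W g \<in> carrier_mat N N"
  unfolding search_hamiltonian_def using adj_carrier[of N E] mp_carrier[of N W] by auto

lemma sh_idx: "i < N \<Longrightarrow> j < N \<Longrightarrow> search_hamiltonian N E W g $$ (i,j) =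
   - (complex_of_real g * adjacency_matrix N E $$ (i,j)) - marked_projector N W $$ (i,j)"
  unfolding search_hamiltonian_def using adj_carrier[of N E] mp_carrier[of N W] by auto

lemma adj_herm: assumes "simple_graph N E" shows "herm N (adjacency_matrix N E)"
  unfolding herm_def
proof (intro conjI allI impI adj_carrier)
  fix i j assume "i < N" "j < N"
  moreover have "E i j = E j i" using assms unfolding simple_graph_def by blast
  ultimately show "adjacency_matrix N E $$ (j, i) = cnj (adjacency_matrix N E $$ (i, j))"
    by (simp add: adj_idx)
qed

lemma mp_herm: "herm N (marked_projector N W)"
  unfolding herm_def by (auto simp: mp_idx mp_carrier)

lemma sh_herm: assumes "simple_graph N E" shows "herm N (search_hamiltonian N E W g)"
  unfolding herm_def
proof (intro conjI allI impI sh_carrier)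
  fix i j assume "i < N" "j < N"
  moreover have "E i j = E j i" using assms unfolding simple_graph_def by blast
  ultimately show "search_hamiltonian N E W g $$ (j, i) = cnj (search_hamiltonian N E W g $$ (i, j))"
    by (auto simp: sh_idx adj_idx mp_idx)
qed

lemma sh_mv: assumes x: "x \<in> carrier_vec N" and r: "r < N"
  shows "(search_hamiltonian N E W g *\<^sub>v x) $ r =
    - (complex_of_real g * (adjacency_matrix N E *\<^sub>v x) $ r) - (marked_projector N W *\<^sub>v x) $ r"
proof -
  have "(search_hamiltonian N E W g *\<^sub>v x) $ r = (\<Sum>s<N. search_hamiltonian N E W g $$ (r,s) * x $ s)"
    by (rule mv_idx[OF sh_carrier x r])
  also have "\<dots> = (\<Sum>s<N. - (complex_of_real g * (adjacency_matrix N E $$ (r,s) * x $ s)) - marked_projector N W $$ (r,s) * x $ s)"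
    using r by (intro sum.cong refl) (simp add: sh_idx left_diff_distrib mult.assoc)
  also have "\<dots> = - (complex_of_real g * (\<Sum>s<N. adjacency_matrix N E $$ (r,s) * x $ s)) - (\<Sum>s<N. marked_projector N W $$ (r,s) * x $ s)"
    by (simp add: sum_subtractf sum_negf sum_distrib_left)
  also have "\<dots> = - (complex_of_real g * (adjacency_matrix N E *\<^sub>v x) $ r) - (marked_projector N W *\<^sub>v x) $ r"
    using mv_idx[OF adj_carrier x r, of E] mv_idx[OF mp_carrier x r, of W] by simp
  finally show ?thesis .
qed

lemma sh_qf: assumes x: "x \<in> carrier_vec N"
  shows "Re (ip x (search_hamiltonian N E W g *\<^sub>v x)) =
    - g * Re (ip x (adjacency_matrix N E *\<^sub>v x)) - Re (ip x (marked_projector N W *\<^sub>v x))"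
proof -
  have "ip x (search_hamiltonian N E W g *\<^sub>v x) =
     (\<Sum>r<N. - (complex_of_real g * (cnj (x $ r) * (adjacency_matrix N E *\<^sub>v x) $ r)) - cnj (x $ r) * (marked_projector N W *\<^sub>v x) $ r)"
    unfolding ip_def using x by (intro sum.cong) (auto simp: sh_mv[OF x] right_diff_distrib simp del: index_mult_mat_vec)
  also have "\<dots> = - (complex_of_real g * ip x (adjacency_matrix N E *\<^sub>v x)) - ip x (marked_projector N W *\<^sub>v x)"
    unfolding ip_def using x by (simp add: sum_subtractf sum_negf sum_distrib_left del: index_mult_mat_vec)
  finally show ?thesis by simp
qed

lemma mp_qf: assumes x: "x \<in> carrier_vec N"
  shows "Re (ip x (marked_projector N W *\<^sub>v x)) = (\<Sum>r<N. if r \<in> W then (cmod (x $ r))^2 else 0)"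
proof -
  have mv: "(marked_projector N W *\<^sub>v x) $ r = (if r \<in> W then x $ r else 0)" if r: "r < N" for r
  proof -
    have "(marked_projector N W *\<^sub>v x) $ r = (\<Sum>s<N. marked_projector N W $$ (r,s) * x $ s)"
      by (rule mv_idx[OF mp_carrier x r])
    also have "\<dots> = (\<Sum>s<N. if s = r then (if r \<in> W then x $ r else 0) else 0)"
      using r by (intro sum.cong refl) (auto simp: mp_idx)
    also have "\<dots> = (if r \<in> W then x $ r else 0)" using r by simp
    finally show ?thesis .
  qed
  have "ip x (marked_projector N W *\<^sub>v x) = (\<Sum>r<N. complex_of_real (if r \<in> W then (cmod (x $ r))^2 else 0))"
    unfolding ip_def using x by (intro sum.cong) (auto simp: mv cnj_mult_self simp del: index_mult_mat_vec)
  thus ?thesis by (simp only: of_real_sum[symmetric] Re_complex_of_real)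
qed

lemma mp_qf_bounds: assumes x: "x \<in> carrier_vec N"
  shows "0 \<le> Re (ip x (marked_projector N W *\<^sub>v x))" "Re (ip x (marked_projector N W *\<^sub>v x)) \<le> nrm2 x"
  unfolding mp_qf[OF x] using x unfolding nrm2_def
  by (auto intro!: sum_nonneg sum_mono)

lemma adj_qf_bound: assumes x: "x \<in> carrier_vec N"
  shows "\<bar>Re (ip x (adjacency_matrix N E *\<^sub>v x))\<bar> \<le> real N * nrm2 x"
  by (rule qf_bound[OF adj_carrier _ x]) (auto simp: adj_idx)

lemma sh_unit_qf: assumes sg: "simple_graph N E" and w: "w < N" "w \<in> W"
  shows "Re (ip (unit_vec N w) (search_hamiltonian N E W g *\<^sub>v unit_vec N w)) = -1"
    and "nrm2 (unit_vec N w) = 1"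
proof -
  have "ip (unit_vec N w) (adjacency_matrix N E *\<^sub>v unit_vec N w) = adjacency_matrix N E $$ (w,w)"
    using ip_unit_left[OF w(1) mult_mat_vec_carrier[OF adj_carrier unit_vec_carrier]] mv_unit[OF adj_carrier w(1) w(1)]
    by simp
  also have "\<dots> = 0" using sg w unfolding simple_graph_def by (simp add: adj_idx)
  finally have a: "ip (unit_vec N w) (adjacency_matrix N E *\<^sub>v unit_vec N w) = 0" .
  have "Re (ip (unit_vec N w) (marked_projector N W *\<^sub>v unit_vec N w)) = (\<Sum>r<N. if r \<in> W then (cmod (unit_vec N w $ r))^2 else 0)"
    by (rule mp_qf) simp
  also have "\<dots> = (\<Sum>r<N. if r = w then 1 else 0)"
    using w by (intro sum.cong) auto
  also have "\<dots> = 1" using w by simp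
  finally show "Re (ip (unit_vec N w) (search_hamiltonian N E W g *\<^sub>v unit_vec N w)) = -1"
    unfolding sh_qf[OF unit_vec_carrier] a by simp
  have "ip (unit_vec N w) (unit_vec N w) = 1" using ip_unit_left[OF w(1), of "unit_vec N w"] w by simp
  thus "nrm2 (unit_vec N w) = 1" unfolding ip_self by simp
qed

lemma pf_gap:
  assumes sg: "simple_graph N E" and cn: "connected_graph N E" and N2: "2 \<le> N"
    and so: "sonb N (adjacency_matrix N E) ps"
  shows "snd (ps!(N-2)) < snd (ps!(N-1))"
proof (rule ccontr)
  assume "\<not> ?thesis"
  moreover have "snd (ps!(N-2)) \<le> snd (ps!(N-1))" using sonb_mono[OF so, of "N-2" "N-1"] N2 by auto
  ultimately have eqphi: "snd (ps!(N-2)) = snd (ps!(N-1))" by simp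
  define A where "A = adjacency_matrix N E"
  define phi where "phi = snd (ps!(N-1))"
  have hA: "herm N A" unfolding A_def by (rule adj_herm[OF sg])
  have Ac: "A \<in> carrier_mat N N" unfolding A_def by (rule adj_carrier)
  have Aidx: "A $$ (r,s) = complex_of_real (if E r s then 1 else 0)" if "r < N" "s < N" for r s
    unfolding A_def using that by (simp add: adj_idx)
  have o: "oeig N A ps" and l: "length ps = N" using so unfolding sonb_def A_def by auto
  define u where "u = fst (ps!(N-2))"
  define w where "w = fst (ps!(N-1))"
  have i1: "N - 2 < length ps" "N - 1 < length ps" using l N2 by auto
  have uc: "u \<in> carrier_vec N" and wc: "w \<in> carrier_vec N"
    using oeig_nth_carrier[OF o i1(1)] oeig_nth_carrier[OF o i1(2)] u_def w_def by auto
  have Au: "A *\<^sub>v u = complex_of_real phi \<cdot>\<^sub>v u"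
    using oeig_nth_eig[OF o i1(1)] eqphi unfolding u_def phi_def by simp
  have Aw: "A *\<^sub>v w = complex_of_real phi \<cdot>\<^sub>v w"
    using oeig_nth_eig[OF o i1(2)] unfolding w_def phi_def by simp
  have uu: "ip u u = 1" and uw: "ip u w = 0" and ww: "ip w w = 1"
    using oeig_nth[OF o i1(1) i1(1)] oeig_nth[OF o i1(1) i1(2)] oeig_nth[OF o i1(2) i1(2)] N2
    unfolding u_def w_def by auto
  have N0: "0 < N" using N2 by simp
  obtain v where vc: "v \<in> carrier_vec N" and vnz: "v \<noteq> 0\<^sub>v N"
    and Av: "A *\<^sub>v v = complex_of_real phi \<cdot>\<^sub>v v" and v0: "v $ 0 = 0"
  proof (cases "w $ 0 = 0")
    case True
    have "w \<noteq> 0\<^sub>v N" using ww wc unfolding ip_def by auto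
    thus ?thesis using that[OF wc _ Aw True] by blast
  next
    case False
    define v where "v = vec N (\<lambda>r. w $ 0 * u $ r - u $ 0 * w $ r)"
    have vc: "v \<in> carrier_vec N" unfolding v_def by simp
    have v0: "v $ 0 = 0" unfolding v_def using N0 by simp
    have "ip u v = w $ 0 * ip u u - u $ 0 * ip u w"
      unfolding ip_def v_def using uc wc
      by (simp add: right_diff_distrib sum_subtractf sum_distrib_left mult.left_commute)
    hence "ip u v = w $ 0" using uu uw by simp
    hence vnz: "v \<noteq> 0\<^sub>v N" using False uc unfolding ip_def by auto
    have Av: "A *\<^sub>v v = complex_of_real phi \<cdot>\<^sub>v v"
    proof (rule eq_vecI)
      fix r assume "r < dim_vec (complex_of_real phi \<cdot>\<^sub>v v)"
      hence r: "r < N" using vc by simp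
      have "(A *\<^sub>v v) $ r = (\<Sum>s<N. A $$ (r,s) * (w $ 0 * u $ s - u $ 0 * w $ s))"
        using mv_idx[OF Ac vc r] unfolding v_def by simp
      also have "\<dots> = w $ 0 * (\<Sum>s<N. A $$ (r,s) * u $ s) - u $ 0 * (\<Sum>s<N. A $$ (r,s) * w $ s)"
        by (simp add: right_diff_distrib sum_subtractf sum_distrib_left mult.left_commute)
      also have "\<dots> = w $ 0 * (A *\<^sub>v u) $ r - u $ 0 * (A *\<^sub>v w) $ r"
        using mv_idx[OF Ac uc r] mv_idx[OF Ac wc r] by simp
      also have "\<dots> = (complex_of_real phi \<cdot>\<^sub>v v) $ r"
        unfolding Au Aw v_def using uc wc r by (simp add: algebra_simps)
      finally show "(A *\<^sub>v v) $ r = (complex_of_real phi \<cdot>\<^sub>v v) $ r" .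
    qed (use Ac vc in simp)
    show ?thesis by (rule that[OF vc vnz Av v0])
  qed
  define y where "y = vec N (\<lambda>r. complex_of_real (cmod (v $ r)))"
  have yc: "y \<in> carrier_vec N" unfolding y_def by simp
  have ny: "nrm2 y = nrm2 v" unfolding nrm2_def y_def using vc by simp
  have qy: "Re (ip y (A *\<^sub>v y)) = (\<Sum>r<N. \<Sum>s<N. cmod (v $ r) * (if E r s then 1 else 0) * cmod (v $ s))"
  proof -
    have "ip y (A *\<^sub>v y) = (\<Sum>r<N. \<Sum>s<N. complex_of_real (cmod (v $ r) * (if E r s then 1 else 0) * cmod (v $ s)))"
      unfolding ip_def using yc Ac
      by (auto simp: mv_idx Aidx sum_distrib_left y_def simp del: index_mult_mat_vec intro!: sum.cong)
    thus ?thesis by (simp only: of_real_sum[symmetric] Re_complex_of_real)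
  qed
  have qv: "ip v (A *\<^sub>v v) = (\<Sum>r<N. \<Sum>s<N. cnj (v $ r) * A $$ (r,s) * v $ s)"
    unfolding ip_def using vc Ac by (simp add: mv_idx sum_distrib_left mult.assoc del: index_mult_mat_vec)
  have "phi * nrm2 v = Re (ip v (A *\<^sub>v v))"
    unfolding Av using vc by (simp add: ip_smult_right ip_self)
  also have "\<dots> \<le> cmod (ip v (A *\<^sub>v v))" by (rule complex_Re_le_cmod)
  also have "\<dots> \<le> (\<Sum>r<N. \<Sum>s<N. cmod (cnj (v $ r) * A $$ (r,s) * v $ s))"
    unfolding qv by (rule order_trans[OF norm_sum sum_mono[OF norm_sum]])
  also have "\<dots> = Re (ip y (A *\<^sub>v y))" unfolding qy
    by (intro sum.cong refl) (auto simp: Aidx norm_mult)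
  finally have ge: "phi * nrm2 y \<le> Re (ip y (A *\<^sub>v y))" unfolding ny .
  have le: "Re (ip y (A *\<^sub>v y)) \<le> phi * nrm2 y"
    unfolding phi_def by (rule rayleigh_upper[OF hA so[folded A_def] yc]) (use N2 in auto)
  have Ay: "A *\<^sub>v y = complex_of_real phi \<cdot>\<^sub>v y"
    unfolding phi_def by (rule max_eigvec[OF hA so[folded A_def] N0 yc]) (use ge le phi_def in simp)
  have propag: "cmod (v $ s) = 0" if r: "r < N" and vr: "cmod (v $ r) = 0" and e: "E r s" for r s
  proof -
    have sN: "s < N" using sg e unfolding simple_graph_def by blast
    have "(A *\<^sub>v y) $ r = complex_of_real (\<Sum>t<N. (if E r t then 1 else 0) * cmod (v $ t))"
      using mv_idx[OF Ac yc r] r by (simp add: Aidx y_def)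
    moreover have "(A *\<^sub>v y) $ r = 0" unfolding Ay using r vr yc by (simp add: y_def)
    ultimately have "complex_of_real (\<Sum>t<N. (if E r t then 1 else 0) * cmod (v $ t)) = 0" by (simp only:)
    hence "(\<Sum>t<N. (if E r t then 1 else 0) * cmod (v $ t)) = 0" by (simp only: of_real_eq_0_iff)
    hence "\<forall>t\<in>{..<N}. (if E r t then 1 else 0) * cmod (v $ t) = 0"
      by (subst (asm) sum_nonneg_eq_0_iff) auto
    hence "(if E r s then 1 else 0) * cmod (v $ s) = 0" using sN by blast
    thus ?thesis using e by simp
  qed
  have reach: "t < N \<longrightarrow> cmod (v $ t) = 0" if "E\<^sup>*\<^sup>* 0 t" for t
    using that
  proof (induction rule: rtranclp_induct)
    case base thus ?case using v0 by simp
  next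
    case (step a b)
    have "a < N" using sg step.hyps(2) unfolding simple_graph_def by blast
    thus ?case using step.IH propag step.hyps(2) by blast
  qed
  have "v = 0\<^sub>v N"
  proof (rule eq_vecI)
    fix t assume "t < dim_vec (0\<^sub>v N :: complex vec)"
    hence t: "t < N" by simp
    have "E\<^sup>*\<^sup>* 0 t" using cn N0 t unfolding connected_graph_def by blast
    thus "v $ t = 0\<^sub>v N $ t" using reach t by simp
  qed (use vc in simp)
  thus False using vnz by simp
qed

lemma lip_cont:
  fixes f :: "real \<Rightarrow> real"
  assumes lip: "\<And>a b. \<bar>f a - f b\<bar> \<le> L * \<bar>a - b\<bar>"
  shows "continuous_on S f"
proof -
  have "isCont f x" for x
    unfolding continuous_at LIM_eq
  proof (intro allI impI)
    fix r :: real assume r: "0 < r"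
    define s where "s = r / (\<bar>L\<bar> + 1)"
    have s: "0 < s" unfolding s_def using r by (simp add: add_pos_nonneg)
    have "\<forall>y. y \<noteq> x \<and> norm (y - x) < s \<longrightarrow> norm (f y - f x) < r"
    proof (intro allI impI)
      fix y assume "y \<noteq> x \<and> norm (y - x) < s"
      hence ys: "\<bar>y - x\<bar> < s" by simp
      have "\<bar>f y - f x\<bar> \<le> L * \<bar>y - x\<bar>" by (rule lip)
      also have "\<dots> \<le> \<bar>L\<bar> * \<bar>y - x\<bar>" by (simp add: mult_right_mono)
      also have "\<dots> \<le> \<bar>L\<bar> * s" using ys by (simp add: mult_left_mono)
      also have "\<dots> < (\<bar>L\<bar> + 1) * s" using s by simp
      also have "\<dots> = r" unfolding s_def by simp
      finally show "norm (f y - f x) < r" by simp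
    qed
    thus "\<exists>s>0. \<forall>y. y \<noteq> x \<and> norm (y - x) < s \<longrightarrow> norm (f y - f x) < r" using s by blast
  qed
  thus ?thesis by (simp add: continuous_at_imp_continuous_on)
qed

theorem proposition4:
  fixes N :: nat and E :: "nat \<Rightarrow> nat \<Rightarrow> bool" and W :: "nat set" and j :: nat
  assumes "N \<ge> 2"
    and "simple_graph N E"
    and "connected_graph N E"
    and "W \<subseteq> {0..<N}" and "W \<noteq> {}"
    and "2 \<le> j" and "j \<le> N"
  shows "\<exists>\<gamma>>0. - \<gamma> * largest_eigenvalue (adjacency_matrix N E) =
           (kth_eigenvalue (search_hamiltonian N E W \<gamma>) 1
            + kth_eigenvalue (search_hamiltonian N E W \<gamma>) j) / 2"
proof -
  have N2: "2 \<le> N" and sg: "simple_graph N E" and cn: "connected_graph N E"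
    and WN: "W \<subseteq> {0..<N}" and Wne: "W \<noteq> {}" and j2: "2 \<le> j" and jN: "j \<le> N"
    using assms by auto
  define A where "A = adjacency_matrix N E"
  define H where "H = (\<lambda>g. search_hamiltonian N E W g)"
  have hA: "herm N A" unfolding A_def by (rule adj_herm[OF sg])
  obtain psA where soA: "sonb N A psA" and evA: "eigenvalues_sorted A = map snd psA"
    using spectral2[OF hA] by blast
  have lA: "length psA = N" and oA: "oeig N A psA" using soA sonb_def by auto
  define phi where "phi = snd (psA!(N-1))"
  define a2 where "a2 = snd (psA!(N-2))"
  have ne: "psA \<noteq> []" using lA N2 by auto
  have phi_eq: "largest_eigenvalue A = phi"
    unfolding largest_eigenvalue_def evA phi_def using lA ne N2 by (simp add: last_map last_conv_nth)
  have hH: "herm N (H g)" for g unfolding H_def by (rule sh_herm[OF sg])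
  define psH where "psH = (\<lambda>g. SOME ps. sonb N (H g) ps \<and> eigenvalues_sorted (H g) = map snd ps)"
  have psH: "sonb N (H g) (psH g) \<and> eigenvalues_sorted (H g) = map snd (psH g)" for g
    unfolding psH_def by (rule someI_ex) (rule spectral2[OF hH])
  have soH: "sonb N (H g) (psH g)" for g using psH by blast
  have lH: "length (psH g) = N" and oH: "oeig N (H g) (psH g)" for g using soH[of g] sonb_def by auto
  define lam where "lam = (\<lambda>k g. snd (psH g ! k))"
  have kth: "kth_eigenvalue (H g) k = lam (k-1) g" if "1 \<le> k" "k \<le> N" for k g
  proof -
    have "k - 1 < length (psH g)" using lH[of g] that by simp
    thus ?thesis unfolding kth_eigenvalue_def lam_def using psH[of g] by simp
  qed
  have qA_bound: "\<bar>Re (ip x (A *\<^sub>v x))\<bar> \<le> real N * nrm2 x" if "x \<in> carrier_vec N" for x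
    unfolding A_def by (rule adj_qf_bound[OF that])
  have Hqf: "Re (ip x (H g *\<^sub>v x)) = - g * Re (ip x (A *\<^sub>v x)) - Re (ip x (marked_projector N W *\<^sub>v x))"
    if "x \<in> carrier_vec N" for x g
    unfolding H_def A_def by (rule sh_qf[OF that])
  note qP = mp_qf_bounds
  have lip1: "lam k a \<le> lam k b + real N * \<bar>a - b\<bar>" if k: "k < N" for k a b
    unfolding lam_def
  proof (rule weyl[OF hH hH soH soH k])
    fix x :: "complex vec" assume x: "x \<in> carrier_vec N"
    have "Re (ip x (H a *\<^sub>v x)) - Re (ip x (H b *\<^sub>v x)) = (b - a) * Re (ip x (A *\<^sub>v x))"
      unfolding Hqf[OF x] by (simp add: algebra_simps)
    also have "\<dots> \<le> \<bar>b - a\<bar> * \<bar>Re (ip x (A *\<^sub>v x))\<bar>"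
      by (metis abs_ge_self abs_mult)
    also have "\<dots> \<le> \<bar>b - a\<bar> * (real N * nrm2 x)" by (intro mult_left_mono qA_bound[OF x]) simp
    finally show "Re (ip x (H a *\<^sub>v x)) \<le> Re (ip x (H b *\<^sub>v x)) + real N * \<bar>a - b\<bar> * nrm2 x"
      by (simp add: abs_minus_commute algebra_simps)
  qed
  have lip: "\<bar>lam k a - lam k b\<bar> \<le> real N * \<bar>a - b\<bar>" if k: "k < N" for k a b
    using lip1[of k a b] lip1[of k b a] k by (simp add: abs_minus_commute abs_le_iff)
  have N0: "0 < N" using N2 by simp
  obtain w where w: "w \<in> W" using Wne by blast
  have wN: "w < N" using w WN by auto
  have l0: "lam 0 g \<le> -1" for g
  proof -
    have "lam 0 g * nrm2 (unit_vec N w) \<le> Re (ip (unit_vec N w) (H g *\<^sub>v unit_vec N w))"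
      unfolding lam_def by (rule rayleigh_lower[OF hH soH unit_vec_carrier N0]) simp
    thus ?thesis using sh_unit_qf(1)[OF sg wN w, of g] sh_unit_qf(2)[OF sg wN w] unfolding H_def by simp
  qed
  have lup: "lam i g \<le> g * real N" if i: "i < N" and g: "0 \<le> g" for i g
  proof -
    define u where "u = fst (psH g ! i)"
    have uc: "u \<in> carrier_vec N" unfolding u_def using oeig_nth_carrier[OF oH] i lH by auto
    have e: "lam i g = Re (ip u (H g *\<^sub>v u))" and nu: "nrm2 u = 1"
      using eigval_qf[OF soH i] unfolding lam_def u_def by auto
    have "- g * Re (ip u (A *\<^sub>v u)) \<le> g * \<bar>Re (ip u (A *\<^sub>v u))\<bar>"
      using mult_left_mono[OF abs_ge_minus_self[of "Re (ip u (A *\<^sub>v u))"] g] by simp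
    also have "\<dots> \<le> g * real N" using qA_bound[OF uc] nu g by (simp add: mult_left_mono)
    finally show ?thesis unfolding e Hqf[OF uc] using qP(1)[OF uc, of W] by simp
  qed
  have phiN: "phi \<le> real N"
  proof -
    define u where "u = fst (psA ! (N-1))"
    have uc: "u \<in> carrier_vec N" unfolding u_def using oeig_nth_carrier[OF oA] N0 lA by auto
    have "phi = Re (ip u (A *\<^sub>v u))" and nu: "nrm2 u = 1"
      using eigval_qf[OF soA, of "N-1"] N0 unfolding phi_def u_def by auto
    thus ?thesis using qA_bound[OF uc] by simp
  qed
  have qA_up: "Re (ip x (A *\<^sub>v x)) \<le> phi * nrm2 x" if x: "x \<in> carrier_vec N" for x
    unfolding phi_def by (rule rayleigh_upper[OF hA soA x]) (use N0 in auto)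
  have llow0: "- g * phi - 1 \<le> lam 0 g" if g: "0 \<le> g" for g
  proof -
    define u where "u = fst (psH g ! 0)"
    have uc: "u \<in> carrier_vec N" unfolding u_def using oeig_nth_carrier[OF oH] N0 lH by auto
    have e: "lam 0 g = Re (ip u (H g *\<^sub>v u))" and nu: "nrm2 u = 1"
      using eigval_qf[OF soH N0] unfolding lam_def u_def by auto
    have "g * Re (ip u (A *\<^sub>v u)) \<le> g * phi" using qA_up[OF uc] nu g by (simp add: mult_left_mono)
    thus ?thesis unfolding e Hqf[OF uc] using qP(2)[OF uc, of W] nu by simp
  qed
  have llow1: "- g * a2 - 1 \<le> lam 1 g" if g: "0 \<le> g" for g
  proof -
    define fs where "fs = fst (psA!(N-1)) # map fst (drop 2 (psH g))"
    have lfs: "length fs < N" unfolding fs_def using lH[of g] N2 by simp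
    have cfs: "set fs \<subseteq> carrier_vec N" unfolding fs_def
      using oA oH[of g] N0 lA unfolding oeig_def by (auto dest: in_set_dropD)
    obtain x where x: "x \<in> carrier_vec N" "x \<noteq> 0\<^sub>v N" and ox: "\<forall>f\<in>set fs. ip f x = 0"
      using kernel_exists[OF cfs lfs] by auto
    have zH: "ip (fst (psH g ! i)) x = 0" if i: "i < N" "1 < i" for i
    proof -
      have e: "2 + (i - 2) = i" using i by simp
      have "drop 2 (psH g) ! (i - 2) = psH g ! (2 + (i - 2))"
        by (rule nth_drop) (use i lH[of g] in simp)
      hence "drop 2 (psH g) ! (i - 2) = psH g ! i" unfolding e .
      moreover have "i - 2 < length (drop 2 (psH g))" using i lH[of g] by simp
      ultimately have "psH g ! i \<in> set (drop 2 (psH g))" by (metis nth_mem)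
      hence "fst (psH g ! i) \<in> set fs" unfolding fs_def by auto
      thus ?thesis using ox by auto
    qed
    have zA: "ip (fst (psA ! i)) x = 0" if i: "i < N" "N - 2 < i" for i
    proof -
      have "i = N - 1" using i by simp
      hence "fst (psA ! i) \<in> set fs" unfolding fs_def by simp
      thus ?thesis using ox by auto
    qed
    have pos: "nrm2 x > 0" using nrm2_eq0[OF x(1)] x(2) nrm2_ge0[of x] by linarith
    have R1: "Re (ip x (H g *\<^sub>v x)) \<le> lam 1 g * nrm2 x"
      unfolding lam_def by (rule rayleigh_upper[OF hH soH x(1) _ zH]) (use N2 in auto)
    have R2: "Re (ip x (A *\<^sub>v x)) \<le> a2 * nrm2 x"
      unfolding a2_def by (rule rayleigh_upper[OF hA soA x(1) _ zA]) (use N2 in auto)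
    have "g * Re (ip x (A *\<^sub>v x)) \<le> g * (a2 * nrm2 x)" using R2 g by (simp add: mult_left_mono)
    hence "(- g * a2 - 1) * nrm2 x \<le> lam 1 g * nrm2 x"
      using R1 Hqf[OF x(1), of g] qP(2)[OF x(1), of W] by (simp add: algebra_simps)
    thus ?thesis using pos by simp
  qed
  have lj: "lam 1 g \<le> lam (j-1) g" for g
    unfolding lam_def using sonb_mono[OF soH, of 1 "j-1"] j2 jN by auto
  have gap: "a2 < phi" unfolding a2_def phi_def using pf_gap[OF sg cn N2 soA[unfolded A_def]] .
  define f where "f = (\<lambda>g. lam 0 g + lam (j-1) g + 2 * g * phi)"
  define g0 where "g0 = 1 / (4 * real N)"
  have g0pos: "0 < g0" unfolding g0_def using N0 by simp
  have g0N: "g0 * real N = 1/4" unfolding g0_def using N0 by simp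
  have f0: "f g0 \<le> 0"
  proof -
    have "lam (j-1) g0 \<le> g0 * real N" using lup[of "j-1" g0] jN j2 g0pos by simp
    moreover have "2 * g0 * phi \<le> 2 * g0 * real N" using phiN g0pos by simp
    ultimately have "f g0 \<le> -1 + g0 * real N + 2 * g0 * real N" unfolding f_def using l0[of g0] by simp
    also have "\<dots> = -1 + 3 * (g0 * real N)" by simp
    also have "\<dots> \<le> 0" unfolding g0N by simp
    finally show ?thesis .
  qed
  define g1 where "g1 = g0 + 3 / (phi - a2)"
  have dpos: "0 < phi - a2" using gap by simp
  have g01: "g0 \<le> g1" unfolding g1_def using dpos by simp
  have g1pos: "0 \<le> g1" using g01 g0pos by simp
  have f1: "0 \<le> f g1"
  proof -
    have "f g1 \<ge> (- g1 * phi - 1) + (- g1 * a2 - 1) + 2 * g1 * phi"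
      unfolding f_def using llow0[OF g1pos] llow1[OF g1pos] lj[of g1] by simp
    moreover have "(- g1 * phi - 1) + (- g1 * a2 - 1) + 2 * g1 * phi = g1 * (phi - a2) - 2"
      by (simp add: algebra_simps)
    moreover have "g1 * (phi - a2) = g0 * (phi - a2) + 3"
      unfolding g1_def using dpos by (simp add: field_simps)
    moreover have "0 \<le> g0 * (phi - a2)" using g0pos dpos by simp
    ultimately show ?thesis by linarith
  qed
  have jN': "j - 1 < N" using jN j2 by simp
  have cont: "continuous_on {g0..g1} f"
  proof (rule lip_cont)
    fix a b
    have "\<bar>f a - f b\<bar> \<le> \<bar>lam 0 a - lam 0 b\<bar> + \<bar>lam (j-1) a - lam (j-1) b\<bar> + \<bar>2 * phi\<bar> * \<bar>a - b\<bar>"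
      unfolding f_def by (simp add: abs_mult[symmetric] algebra_simps abs_triangle_ineq4)
    also have "\<dots> \<le> real N * \<bar>a - b\<bar> + real N * \<bar>a - b\<bar> + \<bar>2 * phi\<bar> * \<bar>a - b\<bar>"
      using lip[OF N0, of a b] lip[OF jN', of a b] by simp
    also have "\<dots> = (2 * real N + \<bar>2 * phi\<bar>) * \<bar>a - b\<bar>" by (simp add: algebra_simps)
    finally show "\<bar>f a - f b\<bar> \<le> (2 * real N + \<bar>2 * phi\<bar>) * \<bar>a - b\<bar>" .
  qed
  obtain gm where gm: "g0 \<le> gm" "gm \<le> g1" "f gm = 0" using IVT'[of f g0 0 g1, OF f0 f1 g01 cont] by blast
  have gmpos: "0 < gm" using gm g0pos by simp
  have "kth_eigenvalue (search_hamiltonian N E W gm) 1 = lam 0 gm"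
    using kth[of 1 gm] N0 unfolding H_def by simp
  moreover have "kth_eigenvalue (search_hamiltonian N E W gm) j = lam (j-1) gm"
    using kth[of j gm] j2 jN unfolding H_def by simp
  moreover have "largest_eigenvalue (adjacency_matrix N E) = phi" using phi_eq A_def by simp
  ultimately have "- gm * largest_eigenvalue (adjacency_matrix N E) =
           (kth_eigenvalue (search_hamiltonian N E W gm) 1 + kth_eigenvalue (search_hamiltonian N E W gm) j) / 2"
    using gm(3) unfolding f_def by (simp add: algebra_simps)
  thus ?thesis using gmpos by blast
qed

end
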